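(* Let $p_{0,0},p_{1,0}\in[0,1]$ with $p_{0,0}>p_{1,0}$ (positively correlated arm), $0\le\rho_0<\rho_1\le1$, and $K\ge1$ an integer. Then the belief updates $\gamma_0,\gamma_1,\gamma_2$ defined in the context are increasing in $\pi\in[0,1]$; moreover $\gamma_1$ is convex and $\gamma_0$ is concave, and $p_{1,0}\le\gamma_1(\pi)\le\gamma_0(\pi)\le p_{0,0}$ for all $\pi\in[0,1]$.
   Context: For $\pi\in[0,1]$ define $\gamma_1(\pi)=\frac{(1-\pi)\rho_1p_{1,0}+\pi\rho_0p_{0,0}}{\rho_1(1-\pi)+\rho_0\pi}$, $\gamma_0(\pi)=\frac{(1-\pi)(1-\rho_1)p_{1,0}+\pi(1-\rho_0)p_{0,0}}{(1-\rho_1)(1-\pi)+(1-\rho_0)\pi}$, $\gamma_2(\pi)=(p_{0,0}-p_{1,0})^K\pi+p_{1,0}\sum_{j=0}^{K-1}(p_{0,0}-p_{1,0})^j$. (These are the posterior probabilities of hidden state $0$ of a two-state Markov chain with transition probabilities $p_{i,0}$ from state $i$ to $0$, after respectively an ACK, a NACK, or no play; $\rho_i$ is the ACK probability in state $i$.) *)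

theory Defs
  imports "HOL-Analysis.Analysis"
begin

text \<open>Posterior probability of hidden state 0 after an ACK.\<close>
definition gamma1 :: "real \<Rightarrow> real \<Rightarrow> real \<Rightarrow> real \<Rightarrow> real \<Rightarrow> real" where
  "gamma1 p00 p10 \<rho>0 \<rho>1 \<pi> =
     ((1 - \<pi>) * \<rho>1 * p10 + \<pi> * \<rho>0 * p00) / (\<rho>1 * (1 - \<pi>) + \<rho>0 * \<pi>)"

text \<open>Posterior probability of hidden state 0 after a NACK.\<close>
definition gamma0 :: "real \<Rightarrow> real \<Rightarrow> real \<Rightarrow> real \<Rightarrow> real \<Rightarrow> real" where
  "gamma0 p00 p10 \<rho>0 \<rho>1 \<pi> =
     ((1 - \<pi>) * (1 - \<rho>1) * p10 + \<pi> * (1 - \<rho>0) * p00) /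
     ((1 - \<rho>1) * (1 - \<pi>) + (1 - \<rho>0) * \<pi>)"

text \<open>Belief after K steps without play.\<close>
definition gamma2 :: "real \<Rightarrow> real \<Rightarrow> nat \<Rightarrow> real \<Rightarrow> real" where
  "gamma2 p00 p10 K \<pi> =
     (p00 - p10) ^ K * \<pi> + p10 * (\<Sum>j<K. (p00 - p10) ^ j)"

text \<open>Sets of beliefs in [0,1] on which the posteriors are well defined
  (denominator = probability of the observation is nonzero).\<close>
definition dom1 :: "real \<Rightarrow> real \<Rightarrow> real set" where
  "dom1 \<rho>0 \<rho>1 = {\<pi> \<in> {0..1}. \<rho>1 * (1 - \<pi>) + \<rho>0 * \<pi> \<noteq> 0}"

definition dom0 :: "real \<Rightarrow> real \<Rightarrow> real set" where
  "dom0 \<rho>0 \<rho>1 = {\<pi> \<in> {0..1}. (1 - \<rho>1) * (1 - \<pi>) + (1 - \<rho>0) * \<pi> \<noteq> 0}"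

end

theory Submission
  imports Defs
begin

definition F :: "real \<Rightarrow> real \<Rightarrow> real \<Rightarrow> real \<Rightarrow> real \<Rightarrow> real" where
  "F a b u v x = ((1 - x) * a * u + x * b * v) / (a * (1 - x) + b * x)"

definition Dn :: "real \<Rightarrow> real \<Rightarrow> real \<Rightarrow> real" where
  "Dn a b x = a * (1 - x) + b * x"

lemma F_deriv:
  assumes "Dn a b x \<noteq> 0"
  shows "(F a b u v has_real_derivative (a*b*(v-u)) / (Dn a b x)^2) (at x)"
proof -
  have "((\<lambda>x. ((1 - x) * a * u + x * b * v) / (a * (1 - x) + b * x)) has_real_derivative (a*b*(v-u)) / (Dn a b x)^2) (at x)"
    using assms unfolding Dn_def
    by (auto intro!: derivative_eq_intros simp: field_simps power2_eq_square)
  then show ?thesis unfolding F_def[abs_def] .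
qed

lemma F_deriv2:
  assumes "Dn a b x \<noteq> 0"
  shows "((\<lambda>x. k / (Dn a b x)^2) has_real_derivative 2*k*(a-b) / (Dn a b x)^3) (at x)"
proof -
  have "((\<lambda>x. k / (Dn a b x)^2) has_real_derivative
     - (k * (of_nat 2 * (Dn a b x)^(2-1) * (b - a))) / ((Dn a b x)^2 * (Dn a b x)^2)) (at x)"
    using assms unfolding Dn_def
    by (intro derivative_eq_intros refl) auto
  moreover have "- (k * (of_nat 2 * (Dn a b x)^(2-1) * (b - a))) / ((Dn a b x)^2 * (Dn a b x)^2)
     = 2*k*(a-b) / (Dn a b x)^3"
    using assms by (simp add: field_simps power2_eq_square power3_eq_cube)
  ultimately show ?thesis by simp
qed

lemma F_diff:
  assumes "Dn a b x \<noteq> 0" "Dn a b y \<noteq> 0"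
  shows "F a b u v y - F a b u v x = a*b*(v-u)*(y-x) / (Dn a b x * Dn a b y)"
  using assms unfolding F_def Dn_def by (simp add: field_simps)

lemma F_lo:
  assumes "Dn a b x \<noteq> 0"
  shows "F a b u v x - u = b*x*(v-u) / Dn a b x"
  using assms unfolding F_def Dn_def by (simp add: field_simps)

lemma F_hi:
  assumes "Dn a b x \<noteq> 0"
  shows "v - F a b u v x = a*(1-x)*(v-u) / Dn a b x"
  using assms unfolding F_def Dn_def by (simp add: field_simps)

lemma Dn_pos:
  assumes "0 \<le> a" "0 \<le> b" "x \<in> {0..1}" "Dn a b x \<noteq> 0"
  shows "Dn a b x > 0"
proof -
  have "Dn a b x \<ge> 0" using assms unfolding Dn_def by (auto intro!: add_nonneg_nonneg mult_nonneg_nonneg)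
  then show ?thesis using assms(4) by linarith
qed

lemma S_convex:
  assumes "0 \<le> a" "0 \<le> b"
  shows "convex {x \<in> {0..1}. Dn a b x \<noteq> (0::real)}"
proof (rule convexI)
  fix x y u v :: real
  assume x: "x \<in> {x \<in> {0..1}. Dn a b x \<noteq> 0}" and y: "y \<in> {x \<in> {0..1}. Dn a b x \<noteq> 0}"
    and uv: "0 \<le> u" "0 \<le> v" "u + v = 1"
  have px: "Dn a b x > 0" using x Dn_pos assms by auto
  have py: "Dn a b y > 0" using y Dn_pos assms by auto
  have e: "Dn a b (u *\<^sub>R x + v *\<^sub>R y) = u * Dn a b x + v * Dn a b y"
  proof -
    have "a * u + a * v = a" "b * u + b * v = b" using uv by (metis distrib_left mult_1_right)+
    then show ?thesis unfolding Dn_def by (simp add: algebra_simps)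
  qed
  have "u * Dn a b x + v * Dn a b y > 0"
  proof (cases "u = 0")
    case True then show ?thesis using uv py by simp
  next
    case False then have "u > 0" using uv by simp
    then show ?thesis using px py uv by (simp add: add_pos_nonneg)
  qed
  moreover have "u *\<^sub>R x + v *\<^sub>R y \<in> {0..1}"
  proof -
    have "0 \<le> u * x + v * y" using x y uv by simp
    moreover have "u * x + v * y \<le> u * 1 + v * 1" using x y uv by (intro add_mono mult_left_mono) auto
    ultimately show ?thesis using uv by simp
  qed
  ultimately show "u *\<^sub>R x + v *\<^sub>R y \<in> {x \<in> {0..1}. Dn a b x \<noteq> 0}" using e by simp
qed

lemma F_props:
  assumes "0 \<le> a" "0 \<le> b" "u \<le> v"
  defines "S \<equiv> {x \<in> {0..1}. Dn a b x \<noteq> (0::real)}"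
  shows "mono_on S (F a b u v)"
    and "b \<le> a \<Longrightarrow> convex_on S (F a b u v)"
    and "a \<le> b \<Longrightarrow> concave_on S (F a b u v)"
    and "x \<in> S \<Longrightarrow> u \<le> F a b u v x \<and> F a b u v x \<le> v"
proof -
  have pos: "\<And>x. x \<in> S \<Longrightarrow> Dn a b x > 0" using Dn_pos assms unfolding S_def by auto
  show "mono_on S (F a b u v)"
  proof (rule mono_onI)
    fix x y assume xy: "x \<in> S" "y \<in> S" "x \<le> y"
    have "F a b u v y - F a b u v x = a*b*(v-u)*(y-x) / (Dn a b x * Dn a b y)"
      using F_diff pos xy by (metis less_irrefl)
    moreover have "a*b*(v-u)*(y-x) / (Dn a b x * Dn a b y) \<ge> 0"
      using assms xy pos[of x] pos[of y] by (intro divide_nonneg_pos mult_nonneg_nonneg) auto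
    ultimately show "F a b u v x \<le> F a b u v y" by linarith
  qed
  have cS: "convex S" unfolding S_def using S_convex assms by blast
  show "b \<le> a \<Longrightarrow> convex_on S (F a b u v)"
  proof (rule f''_ge0_imp_convex[OF cS])
    show "\<And>x. x \<in> S \<Longrightarrow> (F a b u v has_real_derivative (a*b*(v-u)) / (Dn a b x)^2) (at x)"
      using F_deriv pos by (metis less_irrefl)
    show "\<And>x. x \<in> S \<Longrightarrow> ((\<lambda>x. (a*b*(v-u)) / (Dn a b x)^2) has_real_derivative 2*(a*b*(v-u))*(a-b) / (Dn a b x)^3) (at x)"
      using F_deriv2 pos by (metis less_irrefl)
    show "\<And>x. x \<in> S \<Longrightarrow> b \<le> a \<Longrightarrow> 0 \<le> 2*(a*b*(v-u))*(a-b) / (Dn a b x)^3"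
      using pos assms by (intro divide_nonneg_pos mult_nonneg_nonneg) auto
  qed
  show "a \<le> b \<Longrightarrow> concave_on S (F a b u v)"
  proof (rule f''_le0_imp_concave[OF cS])
    show "\<And>x. x \<in> S \<Longrightarrow> (F a b u v has_real_derivative (a*b*(v-u)) / (Dn a b x)^2) (at x)"
      using F_deriv pos by (metis less_irrefl)
    show "\<And>x. x \<in> S \<Longrightarrow> ((\<lambda>x. (a*b*(v-u)) / (Dn a b x)^2) has_real_derivative 2*(a*b*(v-u))*(a-b) / (Dn a b x)^3) (at x)"
      using F_deriv2 pos by (metis less_irrefl)
    fix x assume x: "x \<in> S" "a \<le> b"
    have "0 \<le> 2*(a*b*(v-u))*(b-a) / (Dn a b x)^3"
      using pos[OF x(1)] assms x by (intro divide_nonneg_pos mult_nonneg_nonneg) auto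
    then show "2*(a*b*(v-u))*(a-b) / (Dn a b x)^3 \<le> 0"
      by (simp add: divide_simps algebra_simps split: if_splits)
  qed
  assume x: "x \<in> S"
  have p: "Dn a b x > 0" using pos x by auto
  have x01: "0 \<le> x" "x \<le> 1" using x unfolding S_def by auto
  have "b*x*(v-u) / Dn a b x \<ge> 0" using p assms x01 by (intro divide_nonneg_pos mult_nonneg_nonneg) auto
  moreover have "a*(1-x)*(v-u) / Dn a b x \<ge> 0" using p assms x01 by (intro divide_nonneg_pos mult_nonneg_nonneg) auto
  ultimately show "u \<le> F a b u v x \<and> F a b u v x \<le> v"
    using F_lo[of a b x u v] F_hi[of a b x v u] p by (metis diff_ge_0_iff_ge less_irrefl)
qed


theorem lemma2:
  fixes p00 p10 \<rho>0 \<rho>1 :: real and K :: nat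
  assumes "0 \<le> p10" "p10 < p00" "p00 \<le> 1"
    and "0 \<le> \<rho>0" "\<rho>0 < \<rho>1" "\<rho>1 \<le> 1"
    and "K \<ge> 1"
  shows "mono_on (dom1 \<rho>0 \<rho>1) (gamma1 p00 p10 \<rho>0 \<rho>1)
       \<and> mono_on (dom0 \<rho>0 \<rho>1) (gamma0 p00 p10 \<rho>0 \<rho>1)
       \<and> mono_on {0..1} (gamma2 p00 p10 K)
       \<and> convex_on (dom1 \<rho>0 \<rho>1) (gamma1 p00 p10 \<rho>0 \<rho>1)
       \<and> concave_on (dom0 \<rho>0 \<rho>1) (gamma0 p00 p10 \<rho>0 \<rho>1)
       \<and> (\<forall>\<pi> \<in> dom1 \<rho>0 \<rho>1 \<inter> dom0 \<rho>0 \<rho>1.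
            p10 \<le> gamma1 p00 p10 \<rho>0 \<rho>1 \<pi>
          \<and> gamma1 p00 p10 \<rho>0 \<rho>1 \<pi> \<le> gamma0 p00 p10 \<rho>0 \<rho>1 \<pi>
          \<and> gamma0 p00 p10 \<rho>0 \<rho>1 \<pi> \<le> p00)"
proof -
  have g1: "gamma1 p00 p10 \<rho>0 \<rho>1 = F \<rho>1 \<rho>0 p10 p00"
    by (rule ext) (simp add: gamma1_def F_def)
  have g0: "gamma0 p00 p10 \<rho>0 \<rho>1 = F (1-\<rho>1) (1-\<rho>0) p10 p00"
    by (rule ext) (simp add: gamma0_def F_def)
  have d1: "dom1 \<rho>0 \<rho>1 = {x \<in> {0..1}. Dn \<rho>1 \<rho>0 x \<noteq> 0}"
    by (simp add: dom1_def Dn_def)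
  have d0: "dom0 \<rho>0 \<rho>1 = {x \<in> {0..1}. Dn (1-\<rho>1) (1-\<rho>0) x \<noteq> 0}"
    by (simp add: dom0_def Dn_def)
  have a1: "0 \<le> \<rho>1" "0 \<le> \<rho>0" "p10 \<le> p00" using assms by auto
  have a0: "0 \<le> 1-\<rho>1" "0 \<le> 1-\<rho>0" using assms by auto
  note P1 = F_props[OF a1]
  note P0 = F_props[OF a0 a1(3)]
  have m2: "mono_on {0..1} (gamma2 p00 p10 K)"
  proof (rule mono_onI)
    fix x y :: real assume "x \<le> y"
    moreover have "0 \<le> (p00 - p10)^K" using assms by simp
    ultimately have "(p00 - p10)^K * x \<le> (p00 - p10)^K * y" by (simp add: mult_left_mono)
    then show "gamma2 p00 p10 K x \<le> gamma2 p00 p10 K y" unfolding gamma2_def by simp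
  qed
  have bd: "p10 \<le> gamma1 p00 p10 \<rho>0 \<rho>1 x
          \<and> gamma1 p00 p10 \<rho>0 \<rho>1 x \<le> gamma0 p00 p10 \<rho>0 \<rho>1 x
          \<and> gamma0 p00 p10 \<rho>0 \<rho>1 x \<le> p00" if x: "x \<in> dom1 \<rho>0 \<rho>1 \<inter> dom0 \<rho>0 \<rho>1" for x
  proof -
    have x1: "x \<in> {x \<in> {0..1}. Dn \<rho>1 \<rho>0 x \<noteq> 0}" using x d1 by auto
    have x0: "x \<in> {x \<in> {0..1}. Dn (1-\<rho>1) (1-\<rho>0) x \<noteq> 0}" using x d0 by auto
    have D1: "Dn \<rho>1 \<rho>0 x > 0" using Dn_pos[OF a1(1,2)] x1 by auto
    have D0: "Dn (1-\<rho>1) (1-\<rho>0) x > 0" using Dn_pos[OF a0] x0 by auto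
    have x01: "0 \<le> x" "x \<le> 1" using x1 by auto
    have key: "(1-\<rho>0)*x * Dn \<rho>1 \<rho>0 x - \<rho>0*x * Dn (1-\<rho>1) (1-\<rho>0) x = x*(1-x)*(\<rho>1-\<rho>0)"
      unfolding Dn_def by (simp add: algebra_simps)
    have "x*(1-x)*(\<rho>1-\<rho>0) \<ge> 0" using x01 assms by (intro mult_nonneg_nonneg) auto
    hence "\<rho>0*x * Dn (1-\<rho>1) (1-\<rho>0) x \<le> (1-\<rho>0)*x * Dn \<rho>1 \<rho>0 x" using key by linarith
    hence w: "\<rho>0*x / Dn \<rho>1 \<rho>0 x \<le> (1-\<rho>0)*x / Dn (1-\<rho>1) (1-\<rho>0) x"
      using D1 D0 by (simp add: divide_simps mult.commute)
    have "\<rho>0*x*(p00-p10) / Dn \<rho>1 \<rho>0 x = (p00-p10) * (\<rho>0*x / Dn \<rho>1 \<rho>0 x)" by simp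
    also have "\<dots> \<le> (p00-p10) * ((1-\<rho>0)*x / Dn (1-\<rho>1) (1-\<rho>0) x)"
      using w assms by (intro mult_left_mono) auto
    also have "\<dots> = (1-\<rho>0)*x*(p00-p10) / Dn (1-\<rho>1) (1-\<rho>0) x" by simp
    finally have "F \<rho>1 \<rho>0 p10 p00 x - p10 \<le> F (1-\<rho>1) (1-\<rho>0) p10 p00 x - p10"
      using F_lo[of \<rho>1 \<rho>0 x p10 p00] F_lo[of "1-\<rho>1" "1-\<rho>0" x p10 p00] D1 D0 by simp
    then show ?thesis using P1(4)[OF x1] P0(4)[OF x0] g1 g0 by simp
  qed
  show ?thesis
    unfolding g1 g0 d1 d0
    using P1(1) P0(1) m2 P1(2) P0(3) assms bd g1 g0 d1 d0 by auto
qed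

end
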